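(* Let $0<a<r$ and let $x$ be a point with $|x|=a$ and $\xi\neq0$ a vector tangent to the circle $\{|z|=a\}$ at $x$ (i.e. $\langle x,\xi\rangle=0$). Then the flag curvature of the Funk–Finsler metric $\mathcal{F}$ on $\mathbb{D}_K(1)$ satisfies $$\mathbf{K}(x,\xi)=-\Big(1-\tfrac34\Big(\frac{1-r^2}{1-a^2}\Big)^2\Big),$$ which depends only on $a$ and is negative.
   Context: $r=\frac{e^2-1}{e^2+1}$, $\mathbb{D}_K(1)=\{x\in\mathbb{R}^2:|x|<r\}$, $\mathcal{F}(x,\xi)=\frac{\sqrt{(r^2-|x|^2)|\xi|^2+\langle x,\xi\rangle^2}}{r^2-|x|^2}+\frac{(1-r^2)\langle x,\xi\rangle}{(r^2-|x|^2)(1-|x|^2)}$. The flag curvature of a 2-dimensional Finsler metric $F$ is $\mathbf{K}=\mathrm{Ric}/F^2$ where $\mathrm{Ric}=R^i_i$ is the trace of the Riemann curvature $R^i_k=2\partial_{x^k}G^i-\xi^j\partial_{x^j}\partial_{\xi^k}G^i+2G^j\partial_{\xi^j}\partial_{\xi^k}G^i-\partial_{\xi^j}G^i\,\partial_{\xi^k}G^j$ and $G^i=\frac14g^{i\ell}\{[F^2]_{x^k\xi^\ell}\xi^k-[F^2]_{x^\ell}\}$ are the spray coefficients. *)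

theory Defs
  imports "HOL-Analysis.Analysis"
begin

definition rK :: real where
  "rK = (exp 2 - 1) / (exp 2 + 1)"

definition DK1 :: "(real^2) set" where
  "DK1 = {x. norm x < rK}"

definition FunkF :: "real^2 \<Rightarrow> real^2 \<Rightarrow> real" where
  "FunkF x \<xi> =
     sqrt ((rK^2 - (norm x)^2) * (norm \<xi>)^2 + (x \<bullet> \<xi>)^2) / (rK^2 - (norm x)^2)
     + (1 - rK^2) * (x \<bullet> \<xi>) / ((rK^2 - (norm x)^2) * (1 - (norm x)^2))"

definition pdx :: "2 \<Rightarrow> (real^2 \<Rightarrow> real^2 \<Rightarrow> real) \<Rightarrow> real^2 \<Rightarrow> real^2 \<Rightarrow> real" where
  "pdx k f x \<xi> = deriv (\<lambda>t. f (x + t *\<^sub>R axis k 1) \<xi>) 0"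

definition pdy :: "2 \<Rightarrow> (real^2 \<Rightarrow> real^2 \<Rightarrow> real) \<Rightarrow> real^2 \<Rightarrow> real^2 \<Rightarrow> real" where
  "pdy k f x \<xi> = deriv (\<lambda>t. f x (\<xi> + t *\<^sub>R axis k 1)) 0"

definition fund_tensor :: "(real^2 \<Rightarrow> real^2 \<Rightarrow> real) \<Rightarrow> real^2 \<Rightarrow> real^2 \<Rightarrow> real^2^2" where
  "fund_tensor F x \<xi> = (\<chi> i j. (1/2) * pdy i (pdy j (\<lambda>x \<xi>. (F x \<xi>)^2)) x \<xi>)"

definition fund_tensor_inv :: "(real^2 \<Rightarrow> real^2 \<Rightarrow> real) \<Rightarrow> real^2 \<Rightarrow> real^2 \<Rightarrow> real^2^2" where
  "fund_tensor_inv F x \<xi> = matrix_inv (fund_tensor F x \<xi>)"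

definition spray :: "(real^2 \<Rightarrow> real^2 \<Rightarrow> real) \<Rightarrow> 2 \<Rightarrow> real^2 \<Rightarrow> real^2 \<Rightarrow> real" where
  "spray F i x \<xi> = (1/4) * (\<Sum>l\<in>UNIV. fund_tensor_inv F x \<xi> $ i $ l *
       ((\<Sum>k\<in>UNIV. pdx k (pdy l (\<lambda>x \<xi>. (F x \<xi>)^2)) x \<xi> * \<xi> $ k)
        - pdx l (\<lambda>x \<xi>. (F x \<xi>)^2) x \<xi>))"

definition riemann :: "(real^2 \<Rightarrow> real^2 \<Rightarrow> real) \<Rightarrow> 2 \<Rightarrow> 2 \<Rightarrow> real^2 \<Rightarrow> real^2 \<Rightarrow> real" where
  "riemann F i k x \<xi> =
     2 * pdx k (spray F i) x \<xi>
     - (\<Sum>j\<in>UNIV. \<xi> $ j * pdx j (pdy k (spray F i)) x \<xi>)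
     + 2 * (\<Sum>j\<in>UNIV. spray F j x \<xi> * pdy j (pdy k (spray F i)) x \<xi>)
     - (\<Sum>j\<in>UNIV. pdy j (spray F i) x \<xi> * pdy k (spray F j) x \<xi>)"

definition ricci :: "(real^2 \<Rightarrow> real^2 \<Rightarrow> real) \<Rightarrow> real^2 \<Rightarrow> real^2 \<Rightarrow> real" where
  "ricci F x \<xi> = (\<Sum>i\<in>UNIV. riemann F i i x \<xi>)"

definition flag_curvature :: "(real^2 \<Rightarrow> real^2 \<Rightarrow> real) \<Rightarrow> real^2 \<Rightarrow> real^2 \<Rightarrow> real" where
  "flag_curvature F x \<xi> = ricci F x \<xi> / (F x \<xi>)^2"

end

theory Submission
  imports Defs
begin


definition CH :: "(real\<Rightarrow>real\<Rightarrow>real\<Rightarrow>bool) \<Rightarrow> (real\<Rightarrow>real\<Rightarrow>real\<Rightarrow>real) \<Rightarrow> (real\<Rightarrow>real\<Rightarrow>real\<Rightarrow>real)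
   \<Rightarrow> (real\<Rightarrow>real\<Rightarrow>real\<Rightarrow>real) \<Rightarrow> (real\<Rightarrow>real\<Rightarrow>real\<Rightarrow>real) \<Rightarrow> bool" where
"CH R h hs hu hq \<longleftrightarrow> (\<forall>S U Q S' U' Q'. (S has_real_derivative S') (at 0) \<longrightarrow> (U has_real_derivative U') (at 0)
   \<longrightarrow> (Q has_real_derivative Q') (at 0) \<longrightarrow> R (S 0) (U 0) (Q 0) \<longrightarrow>
   ((\<lambda>t. h (S t) (U t) (Q t)) has_real_derivative
      (hs (S 0) (U 0) (Q 0) * S' + hu (S 0) (U 0) (Q 0) * U' + hq (S 0) (U 0) (Q 0) * Q')) (at 0))"

lemma CHI:
  assumes "\<And>S U Q S' U' Q'. (S has_real_derivative S') (at 0) \<Longrightarrow> (U has_real_derivative U') (at 0)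
   \<Longrightarrow> (Q has_real_derivative Q') (at 0) \<Longrightarrow> R (S 0) (U 0) (Q 0) \<Longrightarrow>
   ((\<lambda>t. h (S t) (U t) (Q t)) has_real_derivative
      (hs (S 0) (U 0) (Q 0) * S' + hu (S 0) (U 0) (Q 0) * U' + hq (S 0) (U 0) (Q 0) * Q')) (at 0)"
  shows "CH R h hs hu hq"
  using assms unfolding CH_def by blast

lemma CHD:
  assumes "CH R h hs hu hq" "(S has_real_derivative S') (at 0)" "(U has_real_derivative U') (at 0)"
   "(Q has_real_derivative Q') (at 0)" "R (S 0) (U 0) (Q 0)"
  shows "((\<lambda>t. h (S t) (U t) (Q t)) has_real_derivative
      (hs (S 0) (U 0) (Q 0) * S' + hu (S 0) (U 0) (Q 0) * U' + hq (S 0) (U 0) (Q 0) * Q')) (at 0)"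
  using assms unfolding CH_def by blast

lemma CH_mono: "CH R h hs hu hq \<Longrightarrow> (\<And>s u q. R' s u q \<Longrightarrow> R s u q) \<Longrightarrow> CH R' h hs hu hq"
  unfolding CH_def by blast

lemma CH_add:
  assumes "CH R h1 a1 b1 c1" "CH R h2 a2 b2 c2"
  shows "CH R (\<lambda>s u q. h1 s u q + h2 s u q) (\<lambda>s u q. a1 s u q + a2 s u q)
     (\<lambda>s u q. b1 s u q + b2 s u q) (\<lambda>s u q. c1 s u q + c2 s u q)"
proof (rule CHI, goal_cases)
  case (1 S U Q S' U' Q')
  note d = 1
  show ?case
    using DERIV_add[OF CHD[OF assms(1) d] CHD[OF assms(2) d]] by (simp add: algebra_simps)
qed

lemma CH_mult:
  assumes "CH R h1 a1 b1 c1" "CH R h2 a2 b2 c2"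
  shows "CH R (\<lambda>s u q. h1 s u q * h2 s u q) (\<lambda>s u q. a1 s u q * h2 s u q + h1 s u q * a2 s u q)
     (\<lambda>s u q. b1 s u q * h2 s u q + h1 s u q * b2 s u q) (\<lambda>s u q. c1 s u q * h2 s u q + h1 s u q * c2 s u q)"
proof (rule CHI, goal_cases)
  case (1 S U Q S' U' Q')
  note d = 1
  show ?case
    using DERIV_mult[OF CHD[OF assms(1) d] CHD[OF assms(2) d]] by (simp add: algebra_simps)
qed

lemma CH_div:
  assumes "CH R h1 a1 b1 c1" "CH R h2 a2 b2 c2" "\<And>s u q. R s u q \<Longrightarrow> h2 s u q \<noteq> 0"
  shows "CH R (\<lambda>s u q. h1 s u q / h2 s u q)
     (\<lambda>s u q. (a1 s u q * h2 s u q - h1 s u q * a2 s u q) / (h2 s u q)^2)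
     (\<lambda>s u q. (b1 s u q * h2 s u q - h1 s u q * b2 s u q) / (h2 s u q)^2)
     (\<lambda>s u q. (c1 s u q * h2 s u q - h1 s u q * c2 s u q) / (h2 s u q)^2)"
proof (rule CHI, goal_cases)
  case (1 S U Q S' U' Q')
  note d = 1
  have nz: "h2 (S 0) (U 0) (Q 0) \<noteq> 0" using assms(3) d(4) by blast
  show ?case
    apply (rule DERIV_cong[OF DERIV_divide[OF CHD[OF assms(1) d] CHD[OF assms(2) d] nz]])
    using nz by (simp add: field_simps power2_eq_square)
qed

lemma CH_const: "CH R (\<lambda>s u q. k) (\<lambda>s u q. 0) (\<lambda>s u q. 0) (\<lambda>s u q. 0)"
  by (rule CHI) (auto intro!: derivative_eq_intros)


lemma CH_cong:
  assumes "CH R h a b c" "\<And>s u q. R s u q \<Longrightarrow> a s u q = a' s u q \<and> b s u q = b' s u q \<and> c s u q = c' s u q"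
  shows "CH R h a' b' c'"
  unfolding CH_def
proof (intro allI impI)
  fix S U Q S' U' Q'
  assume d: "(S has_real_derivative S') (at 0)" "(U has_real_derivative U') (at 0)"
   "(Q has_real_derivative Q') (at 0)" "R (S 0) (U 0) (Q 0)"
  show "((\<lambda>t. h (S t) (U t) (Q t)) has_real_derivative
      (a' (S 0) (U 0) (Q 0) * S' + b' (S 0) (U 0) (Q 0) * U' + c' (S 0) (U 0) (Q 0) * Q')) (at 0)"
    using CHD[OF assms(1) d] assms(2)[OF d(4)] by simp
qed

lemma CH_s: "CH R (\<lambda>s u q. s) (\<lambda>s u q. 1) (\<lambda>s u q. 0) (\<lambda>s u q. 0)"
  by (rule CHI) (auto intro!: derivative_eq_intros)
lemma CH_u: "CH R (\<lambda>s u q. u) (\<lambda>s u q. 0) (\<lambda>s u q. 1) (\<lambda>s u q. 0)"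
  by (rule CHI) (auto intro!: derivative_eq_intros)
lemma CH_q: "CH R (\<lambda>s u q. q) (\<lambda>s u q. 0) (\<lambda>s u q. 0) (\<lambda>s u q. 1)"
  by (rule CHI) (auto intro!: derivative_eq_intros)

lemma CH_sqrt:
  assumes "CH R h a b c" "\<And>s u q. R s u q \<Longrightarrow> 0 < h s u q"
  shows "CH R (\<lambda>s u q. sqrt (h s u q)) (\<lambda>s u q. a s u q / (2 * sqrt (h s u q)))
     (\<lambda>s u q. b s u q / (2 * sqrt (h s u q))) (\<lambda>s u q. c s u q / (2 * sqrt (h s u q)))"
proof (rule CHI, goal_cases)
  case (1 S U Q S' U' Q')
  note d = 1
  have p: "0 < h (S 0) (U 0) (Q 0)" using assms(2) d(4) by blast
  show ?case
    apply (rule DERIV_cong[OF DERIV_chain2[OF DERIV_real_sqrt[OF p] CHD[OF assms(1) d]]])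
    using p by (simp add: field_simps)
qed



lemma rK_pos: "0 < rK" and rK_lt1: "rK < 1"
proof -
  have e: "exp (2::real) > 1" by simp
  have p: "exp (2::real) + 1 > 0" by (smt (verit) exp_gt_zero)
  show "0 < rK" unfolding rK_def using e p by simp
  show "rK < 1" unfolding rK_def using e p by (simp add: divide_less_eq_1_pos)
qed

definition "cc = 1 - rK^2"
definition AA :: "real \<Rightarrow> real" where "AA s = rK^2 - s"
definition BB :: "real \<Rightarrow> real" where "BB s = 1 - s"
definition WW :: "real \<Rightarrow> real \<Rightarrow> real \<Rightarrow> real" where "WW s u q = sqrt (AA s * q + u^2)"
definition RU :: "real \<Rightarrow> real \<Rightarrow> real \<Rightarrow> bool" where "RU s u q \<longleftrightarrow> s < rK^2 \<and> 0 < q"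

lemma r2_lt1: "rK^2 < 1" using rK_pos rK_lt1 by (simp add: power_less_one_iff)

lemma cc_pos: "0 < cc" unfolding cc_def using r2_lt1 by simp

lemma RU_facts:
  assumes "RU s u q"
  shows "0 < AA s" "0 < BB s" "0 < WW s u q" "(WW s u q)^2 = AA s * q + u^2" "cc < BB s" "BB s - AA s = cc"
    "AA s \<noteq> 0" "BB s \<noteq> 0" "WW s u q \<noteq> 0" "0 < q"
proof -
  show A: "0 < AA s" using assms by (simp add: RU_def AA_def)
  then show "AA s \<noteq> 0" by simp
  show B: "0 < BB s" using assms r2_lt1 by (simp add: RU_def BB_def)
  then show "BB s \<noteq> 0" by simp
  have "0 < AA s * q + u^2" using A assms by (simp add: RU_def add_pos_nonneg)
  then show "0 < WW s u q" "(WW s u q)^2 = AA s * q + u^2" "WW s u q \<noteq> 0" by (simp_all add: WW_def)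
  show "cc < BB s" "BB s - AA s = cc" "0 < q" using assms by (auto simp: cc_def BB_def AA_def RU_def)
qed

lemma CH_AA: "CH R (\<lambda>s u q. AA s) (\<lambda>s u q. -1) (\<lambda>s u q. 0) (\<lambda>s u q. 0)"
  unfolding AA_def by (rule CHI) (auto intro!: derivative_eq_intros)
lemma CH_BB: "CH R (\<lambda>s u q. BB s) (\<lambda>s u q. -1) (\<lambda>s u q. 0) (\<lambda>s u q. 0)"
  unfolding BB_def by (rule CHI) (auto intro!: derivative_eq_intros)

lemma CH_WW: "CH RU WW (\<lambda>s u q. -q/(2*WW s u q)) (\<lambda>s u q. u / WW s u q) (\<lambda>s u q. AA s/(2*WW s u q))"
proof -
  have "CH RU (\<lambda>s u q. AA s * q + u^2) (\<lambda>s u q. -q) (\<lambda>s u q. 2*u) (\<lambda>s u q. AA s)"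
    unfolding AA_def by (rule CHI) (auto intro!: derivative_eq_intros simp: algebra_simps)
  from CH_sqrt[OF this] have "CH RU WW (\<lambda>s u q. -q / (2 * WW s u q)) (\<lambda>s u q. 2*u / (2 * WW s u q)) (\<lambda>s u q. AA s / (2 * WW s u q))"
    unfolding WW_def[abs_def] using RU_facts(4,3) by (metis WW_def power2_eq_square real_sqrt_gt_0_iff)
  then show ?thesis by (rule CH_cong) simp
qed

definition "fF s u q = WW s u q / AA s + cc * u / (AA s * BB s)"
definition "fFs s u q = - q / (2 * AA s * WW s u q) + WW s u q / (AA s)^2 + cc * u * (AA s + BB s) / ((AA s)^2 * (BB s)^2)"
definition "fFu s u q = u / (AA s * WW s u q) + cc / (AA s * BB s)"
definition "fFq s u q = 1 / (2 * WW s u q)"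

lemma CH_fF: "CH RU fF fFs fFu fFq"
  unfolding fF_def[abs_def]
  apply (rule CH_cong)
   apply (rule CH_add CH_div CH_mult CH_WW CH_AA CH_BB CH_const CH_u | (auto simp: RU_facts; fail))+
  subgoal for s u q using RU_facts(1-3,7-10)[of s u q] unfolding fFs_def fFu_def fFq_def
    by (simp add: field_simps power2_eq_square)
  done


definition "fFus s u q = u * (1/((AA s)^2 * WW s u q) + q / (2 * AA s * (WW s u q)^3)) + cc * (AA s + BB s) / ((AA s)^2 * (BB s)^2)"
definition "fFuu s u q = 1 / (AA s * WW s u q) - u^2 / (AA s * (WW s u q)^3)"
definition "fFuq s u q = - u / (2 * (WW s u q)^3)"
definition "fFqs s u q = q / (4 * (WW s u q)^3)"
definition "fFqq s u q = - AA s / (4 * (WW s u q)^3)"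

lemma CH_fFu: "CH RU fFu fFus fFuu fFuq"
  unfolding fFu_def[abs_def]
  apply (rule CH_cong)
   apply (rule CH_add CH_div CH_mult CH_WW CH_AA CH_BB CH_const CH_u | (auto simp: RU_facts; fail))+
  subgoal for s u q using RU_facts(1-3,7-10)[of s u q] unfolding fFus_def fFuu_def fFuq_def
    by (simp add: field_simps power2_eq_square power3_eq_cube)
  done

lemma CH_fFq: "CH RU fFq fFqs fFuq fFqq"
  unfolding fFq_def[abs_def]
  apply (rule CH_cong)
   apply (rule CH_add CH_div CH_mult CH_WW CH_AA CH_BB CH_const CH_u | (auto simp: RU_facts; fail))+
  subgoal for s u q using RU_facts(1-3,7-10)[of s u q] unfolding fFqs_def fFqq_def fFuq_def
    by (simp add: field_simps power2_eq_square power3_eq_cube)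
  done

definition "NN s u q = 2 * u * WW s u q / (AA s)^2 + cc * q / (AA s * BB s) + 2 * cc * u^2 * (AA s + BB s) / ((AA s)^2 * (BB s)^2)"
definition "NNs s u q = 2 * u * (2 * WW s u q / (AA s)^3 - q / (2 * WW s u q * (AA s)^2)) + cc * q * (AA s + BB s) / ((AA s)^2 * (BB s)^2)
   + 4 * cc * u^2 * ((AA s + BB s)^2 - AA s * BB s) / ((AA s)^3 * (BB s)^3)"
definition "NNu s u q = 2 * WW s u q / (AA s)^2 + 2 * u^2 / ((AA s)^2 * WW s u q) + 4 * cc * u * (AA s + BB s) / ((AA s)^2 * (BB s)^2)"

lemma CH_NN: "CH RU NN NNs NNu fFu"
  unfolding NN_def[abs_def] power2_eq_square
  apply (rule CH_cong)
   apply (rule CH_add CH_div CH_mult CH_WW CH_AA CH_BB CH_const CH_u CH_q | (auto simp: RU_facts; fail))+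
  subgoal for s u q using RU_facts(1-3,7-10)[of s u q] unfolding NNs_def NNu_def fFu_def
    by (simp add: field_simps power2_eq_square power3_eq_cube)
  done

definition "RU0 s u q \<longleftrightarrow> RU s u q \<and> u = 0"
definition "NNus0 s u q = - q / (WW s u q * (AA s)^2) + 4 * WW s u q / (AA s)^3"
definition "NNuu0 s u q = 4 * cc * (AA s + BB s) / ((AA s)^2 * (BB s)^2)"
definition "NNuq0 s u q = 1 / (AA s * WW s u q)"

lemma CH_NNu: "CH RU0 NNu NNus0 NNuu0 NNuq0"
  unfolding NNu_def[abs_def] power2_eq_square
  apply (rule CH_cong)
   apply (rule CH_mono[where R=RU])
    prefer 2 apply (simp add: RU0_def)
   apply (rule CH_add CH_div CH_mult CH_WW CH_AA CH_BB CH_const CH_u CH_q | (auto simp: RU_facts; fail))+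
  subgoal for s u q apply (unfold RU0_def, elim conjE)
    using RU_facts(1-3,7-10)[of s u q] unfolding NNus0_def NNuu0_def NNuq0_def
    by (simp add: field_simps power2_eq_square power3_eq_cube)
  done



lemma fF_pos: assumes "RU s u q" shows "0 < fF s u q"
proof -
  note R = RU_facts[OF assms]
  have "u^2 < (WW s u q)^2" using R(4) R(1) R(10) by simp
  then have "\<bar>u\<bar> < WW s u q" using R(3) by (simp add: power2_less_imp_less abs_less_iff) 
  then have "cc * \<bar>u\<bar> \<le> cc * WW s u q" using cc_pos by simp
  also have "\<dots> < BB s * WW s u q" using R(5,3) by simp
  finally have lt: "cc * \<bar>u\<bar> < BB s * WW s u q" .
  have "cc * (-u) \<le> cc * \<bar>u\<bar>" using cc_pos by (intro mult_left_mono) auto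
  with lt have "0 < WW s u q * BB s + cc * u" by (simp add: algebra_simps)
  moreover have "fF s u q = (WW s u q * BB s + cc * u) / (AA s * BB s)"
    unfolding fF_def using R(7,8) by (simp add: field_simps)
  ultimately show ?thesis using R(1,2) by simp
qed

definition "eE s u q = fF s u q * fF s u q"
definition "eEs s u q = 2 * fF s u q * fFs s u q"
definition "eEu s u q = 2 * fF s u q * fFu s u q"
definition "eEq s u q = 2 * fF s u q * fFq s u q"
definition "eEus s u q = 2 * (fFs s u q * fFu s u q + fF s u q * fFus s u q)"
definition "eEuu s u q = 2 * (fFu s u q * fFu s u q + fF s u q * fFuu s u q)"
definition "eEuq s u q = 2 * (fFq s u q * fFu s u q + fF s u q * fFuq s u q)"
definition "eEqs s u q = 2 * (fFs s u q * fFq s u q + fF s u q * fFqs s u q)"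
definition "eEqq s u q = 2 * (fFq s u q * fFq s u q + fF s u q * fFqq s u q)"
definition "pP s u q = NN s u q / (2 * fF s u q)"


context
  fixes s u q :: real
  assumes RUa: "RU s u q"
begin

lemma loc_facts:
  "AA s \<noteq> 0" "WW s u q \<noteq> 0" "BB s \<noteq> 0" "q = ((WW s u q)^2 - u^2) / AA s"
  using RU_facts[OF RUa] by (auto simp: field_simps)


lemma Wobt: obtains W where "WW s u q = W" "W \<noteq> 0" "0 < W" "q = (W^2 - u^2) / AA s"
  using loc_facts RU_facts(3)[OF RUa] by blast

lemma H1f: "u * fFu s u q + 2 * q * fFq s u q = fF s u q"
proof -
  obtain W where W: "WW s u q = W" "W \<noteq> 0" "0 < W" "q = (W^2 - u^2) / AA s" by (rule Wobt)
  show ?thesis unfolding fFu_def fFq_def fF_def W(1) apply (simp only: W(4))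
    using W(2) loc_facts(1,3) by (simp add: field_simps power2_eq_square power3_eq_cube)
qed

lemma H2f: "u * fFuu s u q + 2 * q * fFuq s u q = 0"
proof -
  obtain W where W: "WW s u q = W" "W \<noteq> 0" "0 < W" "q = (W^2 - u^2) / AA s" by (rule Wobt)
  show ?thesis unfolding fFuu_def fFuq_def W(1) apply (simp only: W(4))
    using W(2) loc_facts(1,3) by (simp add: field_simps power2_eq_square power3_eq_cube)
qed

lemma H3f: "u * fFuq s u q + 2 * q * fFqq s u q = - fFq s u q"
proof -
  obtain W where W: "WW s u q = W" "W \<noteq> 0" "0 < W" "q = (W^2 - u^2) / AA s" by (rule Wobt)
  show ?thesis unfolding fFuq_def fFqq_def fFq_def W(1) apply (simp only: W(4))
    using W(2) loc_facts(1,3) by (simp add: field_simps power2_eq_square power3_eq_cube)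
qed

lemma Ham1: "2 * u * fFus s u q + q * fFuu s u q = 2 * fFs s u q"
proof -
  obtain W where W: "WW s u q = W" "W \<noteq> 0" "0 < W" "q = (W^2 - u^2) / AA s" by (rule Wobt)
  show ?thesis unfolding fFus_def fFuu_def fFs_def W(1) apply (simp only: W(4))
    using W(2) loc_facts(1,3) by (simp add: field_simps power2_eq_square power3_eq_cube)
qed

lemma Ham2: "2 * u * fFqs s u q + q * fFuq s u q = 0"
proof -
  obtain W where W: "WW s u q = W" "W \<noteq> 0" "0 < W" "q = (W^2 - u^2) / AA s" by (rule Wobt)
  show ?thesis unfolding fFqs_def fFuq_def W(1) apply (simp only: W(4))
    using W(2) loc_facts(1,3) by (simp add: field_simps power2_eq_square power3_eq_cube)
qed

lemma NNeq: "NN s u q = 2 * u * fFs s u q + q * fFu s u q"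
proof -
  obtain W where W: "WW s u q = W" "W \<noteq> 0" "0 < W" "q = (W^2 - u^2) / AA s" by (rule Wobt)
  show ?thesis unfolding NN_def fFs_def fFu_def W(1) apply (simp only: W(4))
    using W(2) loc_facts(1,3) by (simp add: field_simps power2_eq_square power3_eq_cube)
qed

lemma fnz: "fF s u q \<noteq> 0" using fF_pos[OF RUa] by simp

lemma I1: "2 * pP s u q * (u * eEuu s u q + 2 * q * eEuq s u q) = 2 * u * eEus s u q + q * eEuu s u q - 2 * eEs s u q"
proof -
  have a: "u * eEuu s u q + 2 * q * eEuq s u q = 2 * fF s u q * fFu s u q"
  proof -
    have "u * eEuu s u q + 2 * q * eEuq s u q = 2 * fFu s u q * (u * fFu s u q + 2 * q * fFq s u q) + 2 * fF s u q * (u * fFuu s u q + 2 * q * fFuq s u q)"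
      unfolding eEuu_def eEuq_def by (simp add: algebra_simps)
    then show ?thesis unfolding H1f H2f by simp
  qed
  have b: "2 * u * eEus s u q + q * eEuu s u q - 2 * eEs s u q = 2 * fFu s u q * NN s u q"
  proof -
    have "2 * u * eEus s u q + q * eEuu s u q - 2 * eEs s u q = 2 * fFu s u q * (2 * u * fFs s u q + q * fFu s u q) + 2 * fF s u q * (2 * u * fFus s u q + q * fFuu s u q - 2 * fFs s u q)"
      unfolding eEus_def eEuu_def eEs_def by (simp add: algebra_simps)
    then show ?thesis unfolding NNeq Ham1 by simp
  qed
  show ?thesis unfolding a b pP_def using fnz by (simp add: field_simps)
qed

lemma I2: "2 * pP s u q * (2 * u * eEuq s u q + 4 * q * eEqq s u q + 2 * eEq s u q) = 4 * u * eEqs s u q + 2 * q * eEuq s u q"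
proof -
  have a: "2 * u * eEuq s u q + 4 * q * eEqq s u q + 2 * eEq s u q = 4 * fF s u q * fFq s u q"
  proof -
    have "2 * u * eEuq s u q + 4 * q * eEqq s u q + 2 * eEq s u q = 4 * fFq s u q * (u * fFu s u q + 2 * q * fFq s u q) + 4 * fF s u q * (u * fFuq s u q + 2 * q * fFqq s u q) + 4 * fF s u q * fFq s u q"
      unfolding eEuq_def eEqq_def eEq_def by (simp add: algebra_simps)
    then show ?thesis unfolding H1f H3f by simp
  qed
  have b: "4 * u * eEqs s u q + 2 * q * eEuq s u q = 4 * fFq s u q * NN s u q"
  proof -
    have "4 * u * eEqs s u q + 2 * q * eEuq s u q = 4 * fFq s u q * (2 * u * fFs s u q + q * fFu s u q) + 4 * fF s u q * (2 * u * fFqs s u q + q * fFuq s u q)"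
      unfolding eEqs_def eEuq_def by (simp add: algebra_simps)
    then show ?thesis unfolding NNeq Ham2 by simp
  qed
  show ?thesis unfolding a b pP_def using fnz by (simp add: field_simps)
qed

lemma DetS: "4 * (eEq s u q)^2 + 2 * eEq s u q * (eEuu s u q * s + 4 * eEuq s u q * u + 4 * eEqq s u q * q)
   + 4 * (eEuu s u q * eEqq s u q - (eEuq s u q)^2) * (s * q - u^2) = 4 * (fF s u q)^3 * rK^2 / (WW s u q)^3"
proof -
  obtain W where W: "WW s u q = W" "W \<noteq> 0" "0 < W" "q = (W^2 - u^2) / AA s" by (rule Wobt)
  obtain A where A: "AA s = A" by blast
  obtain B where B: "BB s = B" by blast
  have s: "s = rK^2 - A" using A by (simp add: AA_def)
  have nz: "A \<noteq> 0" "B \<noteq> 0" using A B loc_facts(1,3) by auto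
  show ?thesis unfolding eEq_def eEuu_def eEuq_def eEqq_def fF_def fFq_def fFu_def fFuu_def fFuq_def fFqq_def W(1) A B
    apply (simp only: W(4)[unfolded A])
    apply (simp only: s)
    using W(2) nz by (simp add: field_simps power2_eq_square power3_eq_cube)
qed

end



lemma CH_diff:
  assumes "CH R h1 a1 b1 c1" "CH R h2 a2 b2 c2"
  shows "CH R (\<lambda>s u q. h1 s u q - h2 s u q) (\<lambda>s u q. a1 s u q - a2 s u q)
     (\<lambda>s u q. b1 s u q - b2 s u q) (\<lambda>s u q. c1 s u q - c2 s u q)"
proof (rule CHI, goal_cases)
  case (1 S U Q S' U' Q')
  show ?case using DERIV_diff[OF CHD[OF assms(1) 1] CHD[OF assms(2) 1]] by (simp add: algebra_simps)
qed

lemma fF_nz: "RU s u q \<Longrightarrow> fF s u q \<noteq> 0" using fF_pos by (metis less_irrefl)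

lemma CH_pow2: assumes "CH R h a b c"
  shows "CH R (\<lambda>s u q. (h s u q)^2) (\<lambda>s u q. 2 * h s u q * a s u q) (\<lambda>s u q. 2 * h s u q * b s u q) (\<lambda>s u q. 2 * h s u q * c s u q)"
  unfolding power2_eq_square by (rule CH_cong[OF CH_mult[OF assms assms]]) (simp add: algebra_simps)

lemma CH_eE: "CH RU eE eEs eEu eEq"
  unfolding eE_def[abs_def] by (rule CH_cong[OF CH_mult[OF CH_fF CH_fF]]) (simp add: eEs_def eEu_def eEq_def algebra_simps)

lemma CH_eEu: "CH RU eEu eEus eEuu eEuq"
  unfolding eEu_def[abs_def] by (rule CH_cong[OF CH_mult[OF CH_mult[OF CH_const CH_fF] CH_fFu]])
    (simp add: eEus_def eEuu_def eEuq_def algebra_simps)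

lemma CH_eEq: "CH RU eEq eEqs eEuq eEqq"
  unfolding eEq_def[abs_def] by (rule CH_cong[OF CH_mult[OF CH_mult[OF CH_const CH_fF] CH_fFq]])
    (simp add: eEqs_def eEqq_def eEuq_def algebra_simps)

definition "pPs s u q = (NNs s u q * (2 * fF s u q) - NN s u q * (2 * fFs s u q)) / (2 * fF s u q)^2"
definition "pPu s u q = (NNu s u q * (2 * fF s u q) - NN s u q * (2 * fFu s u q)) / (2 * fF s u q)^2"
definition "pPq s u q = (fFu s u q * (2 * fF s u q) - NN s u q * (2 * fFq s u q)) / (2 * fF s u q)^2"

lemma CH_pP: "CH RU pP pPs pPu pPq"
  unfolding pP_def[abs_def]
  apply (rule CH_cong[OF CH_div[OF CH_NN CH_mult[OF CH_const CH_fF]]])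
  using fF_nz by (auto simp: pPs_def pPu_def pPq_def)

lemma RU0_RU: "RU0 s u q \<Longrightarrow> RU s u q" by (auto simp: RU0_def)

lemma CH_pPu: "\<exists>a1 a2 a3. CH RU0 pPu a1 a2 a3"
  unfolding pPu_def[abs_def]
  apply (intro exI)
  apply (rule CH_div)
    apply (rule CH_add CH_diff CH_mult CH_NNu CH_const CH_mono[OF CH_fF RU0_RU] CH_mono[OF CH_NN RU0_RU]
       CH_mono[OF CH_fFu RU0_RU] CH_pow2 CH_mono[OF CH_fFq RU0_RU] | (auto simp: RU0_def dest: fF_nz; fail))+
  done


lemma u0_obt:
  assumes "RU s 0 q"
  obtains W A B where "WW s 0 q = W" "AA s = A" "BB s = B" "W \<noteq> 0" "A \<noteq> 0" "B \<noteq> 0" "q = W^2 / A"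
proof -
  note R = RU_facts[OF assms]
  show ?thesis apply (rule that[of "WW s 0 q" "AA s" "BB s"]) using R by (auto simp: field_simps)
qed


lemma CH_pPq: "\<exists>b1 b2 b3. CH RU0 pPq b1 b2 b3 \<and> (\<forall>s q. RU s 0 q \<longrightarrow> b2 s 0 q = 0 \<and> b3 s 0 q = - pP s 0 q / (4 * q^2))"
  unfolding pPq_def[abs_def]
  apply (intro exI conjI)
   apply (rule CH_div)
     apply (rule CH_add CH_diff CH_mult CH_NNu CH_const CH_mono[OF CH_fF RU0_RU] CH_mono[OF CH_NN RU0_RU]
       CH_mono[OF CH_fFu RU0_RU] CH_pow2 CH_mono[OF CH_fFq RU0_RU] | (auto simp: RU0_def dest: fF_nz; fail))+
  apply (intro allI impI)
  subgoal premises R for s q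
  proof -
    obtain W A B where o: "WW s 0 q = W" "AA s = A" "BB s = B" "W \<noteq> 0" "A \<noteq> 0" "B \<noteq> 0" "q = W^2 / A"
      by (rule u0_obt[OF R])
    show ?thesis
    unfolding pP_def fF_def fFu_def fFq_def fFuu_def fFuq_def fFqq_def NN_def NNu_def fFs_def fFus_def fFqs_def
    apply (simp only: o(1-3))
    apply (simp only: o(7))
    using o(4-6) by (simp add: field_simps power2_eq_square power3_eq_cube)
  qed
  done

lemma Z1: assumes R: "RU s 0 q" shows "pPq s 0 q = pP s 0 q / (2 * q)"
proof -
  obtain W A B where o: "WW s 0 q = W" "AA s = A" "BB s = B" "W \<noteq> 0" "A \<noteq> 0" "B \<noteq> 0" "q = W^2 / A"
    by (rule u0_obt[OF R])
  show ?thesis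
    unfolding pP_def pPq_def fF_def fFu_def fFq_def NN_def
    apply (simp only: o(1-3))
    apply (simp only: o(7))
    using o(4-6) by (simp add: field_simps power2_eq_square power3_eq_cube)
qed

lemma Z3: assumes R: "RU s 0 q" shows "(pP s 0 q)^2 - q * pPu s 0 q = (fF s 0 q)^2 * (- (1 - (3/4) * (cc / BB s)^2))"
proof -
  obtain W A B where o: "WW s 0 q = W" "AA s = A" "BB s = B" "W \<noteq> 0" "A \<noteq> 0" "B \<noteq> 0" "q = W^2 / A"
    by (rule u0_obt[OF R])
  show ?thesis
    unfolding pP_def pPu_def fF_def fFu_def fFq_def NN_def NNu_def
    apply (simp only: o(1-3))
    apply (simp only: o(7))
    using o(4-6) by (simp add: field_simps power2_eq_square power3_eq_cube)
qed



definition RV :: "real^2 \<Rightarrow> real^2 \<Rightarrow> bool" where "RV x y \<longleftrightarrow> RU (x\<bullet>x) (x\<bullet>y) (y\<bullet>y)"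

lemma FunkF_eq: "FunkF x y = fF (x\<bullet>x) (x\<bullet>y) (y\<bullet>y)"
  unfolding FunkF_def fF_def WW_def AA_def BB_def cc_def power2_norm_eq_inner by simp

lemma F2_eq: "(\<lambda>x y. (FunkF x y)^2) = (\<lambda>x y. eE (x\<bullet>x) (x\<bullet>y) (y\<bullet>y))"
  by (simp add: FunkF_eq eE_def power2_eq_square)

lemma DERIV_sx: "((\<lambda>t. (x + t *\<^sub>R a) \<bullet> (x + t *\<^sub>R a)) has_real_derivative 2 * (x \<bullet> a)) (at 0)"
proof -
  have e: "(\<lambda>t. (x + t *\<^sub>R a) \<bullet> (x + t *\<^sub>R a)) = (\<lambda>t. x\<bullet>x + 2*t*(x\<bullet>a) + t^2 * (a\<bullet>a))"
    by (auto simp: inner_add_left inner_add_right inner_commute power2_eq_square algebra_simps)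
  show ?thesis unfolding e by (auto intro!: derivative_eq_intros)
qed

lemma DERIV_ux: "((\<lambda>t. (x + t *\<^sub>R a) \<bullet> y) has_real_derivative a \<bullet> y) (at 0)"
proof -
  have e: "(\<lambda>t. (x + t *\<^sub>R a) \<bullet> y) = (\<lambda>t. x\<bullet>y + t*(a\<bullet>y))"
    by (auto simp: inner_add_left)
  show ?thesis unfolding e by (auto intro!: derivative_eq_intros)
qed

lemma DERIV_uy: "((\<lambda>t. x \<bullet> (y + t *\<^sub>R b)) has_real_derivative x \<bullet> b) (at 0)"
proof -
  have e: "(\<lambda>t. x \<bullet> (y + t *\<^sub>R b)) = (\<lambda>t. x\<bullet>y + t*(x\<bullet>b))"
    by (auto simp: inner_add_right)
  show ?thesis unfolding e by (auto intro!: derivative_eq_intros)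
qed

lemma DERIV_comp: "((\<lambda>t. (x + t *\<^sub>R a) $ j) has_real_derivative a $ j) (at 0)"
proof -
  have e: "(\<lambda>t. (x + t *\<^sub>R a) $ j) = (\<lambda>t. x$j + t * a$j)" by auto
  show ?thesis unfolding e by (auto intro!: derivative_eq_intros)
qed

lemma line_x:
  assumes "CH RU h hs hu hq" "RV x y" "D = 2 * hs (x\<bullet>x) (x\<bullet>y) (y\<bullet>y) * (x\<bullet>a) + hu (x\<bullet>x) (x\<bullet>y) (y\<bullet>y) * (a\<bullet>y)"
  shows "((\<lambda>t. h ((x + t *\<^sub>R a) \<bullet> (x + t *\<^sub>R a)) ((x + t *\<^sub>R a) \<bullet> y) (y\<bullet>y)) has_real_derivative D) (at 0)"
  apply (rule DERIV_cong[OF CHD[OF assms(1) DERIV_sx[of x a] DERIV_ux[of x a y] DERIV_const[of "y\<bullet>y" "at 0"]]])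
  using assms by (auto simp: RV_def algebra_simps)

lemma line_y:
  assumes "CH RU h hs hu hq" "RV x y" "D = hu (x\<bullet>x) (x\<bullet>y) (y\<bullet>y) * (x\<bullet>b) + 2 * hq (x\<bullet>x) (x\<bullet>y) (y\<bullet>y) * (y\<bullet>b)"
  shows "((\<lambda>t. h (x\<bullet>x) (x \<bullet> (y + t *\<^sub>R b)) ((y + t *\<^sub>R b) \<bullet> (y + t *\<^sub>R b))) has_real_derivative D) (at 0)"
  apply (rule DERIV_cong[OF CHD[OF assms(1) DERIV_const[of "x\<bullet>x" "at 0"] DERIV_uy[of x y b] DERIV_sx[of y b]]])
  using assms by (auto simp: RV_def algebra_simps)

lemma line_x0:
  assumes "CH RU0 h hs hu hq" "RV x y" "x \<bullet> y = 0" "D = 2 * hs (x\<bullet>x) (x\<bullet>y) (y\<bullet>y) * (x\<bullet>a) + hu (x\<bullet>x) (x\<bullet>y) (y\<bullet>y) * (a\<bullet>y)"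
  shows "((\<lambda>t. h ((x + t *\<^sub>R a) \<bullet> (x + t *\<^sub>R a)) ((x + t *\<^sub>R a) \<bullet> y) (y\<bullet>y)) has_real_derivative D) (at 0)"
  apply (rule DERIV_cong[OF CHD[OF assms(1) DERIV_sx[of x a] DERIV_ux[of x a y] DERIV_const[of "y\<bullet>y" "at 0"]]])
  using assms by (auto simp: RV_def RU0_def algebra_simps)

lemma line_y0:
  assumes "CH RU0 h hs hu hq" "RV x y" "x \<bullet> y = 0" "D = hu (x\<bullet>x) (x\<bullet>y) (y\<bullet>y) * (x\<bullet>b) + 2 * hq (x\<bullet>x) (x\<bullet>y) (y\<bullet>y) * (y\<bullet>b)"
  shows "((\<lambda>t. h (x\<bullet>x) (x \<bullet> (y + t *\<^sub>R b)) ((y + t *\<^sub>R b) \<bullet> (y + t *\<^sub>R b))) has_real_derivative D) (at 0)"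
  apply (rule DERIV_cong[OF CHD[OF assms(1) DERIV_const[of "x\<bullet>x" "at 0"] DERIV_uy[of x y b] DERIV_sx[of y b]]])
  using assms by (auto simp: RV_def RU0_def algebra_simps)

lemma ev_x: assumes "RV x y" shows "eventually (\<lambda>t. RV (x + t *\<^sub>R a) y) (nhds 0)"
proof -
  have c: "((\<lambda>t. (x + t *\<^sub>R a) \<bullet> (x + t *\<^sub>R a)) \<longlongrightarrow> x \<bullet> x) (at 0)"
    using DERIV_isCont[OF DERIV_sx[of x a]] by (simp add: isCont_def)
  have "x \<bullet> x < rK^2" using assms by (simp add: RV_def RU_def)
  from order_tendstoD(2)[OF c this] have "eventually (\<lambda>t. (x + t *\<^sub>R a) \<bullet> (x + t *\<^sub>R a) < rK^2) (at 0)" .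
  then show ?thesis using assms unfolding eventually_nhds_conv_at
    by (auto simp: RV_def RU_def elim: eventually_mono)
qed

lemma ev_y: assumes "RV x y" shows "eventually (\<lambda>t. RV x (y + t *\<^sub>R b)) (nhds 0)"
proof -
  have c: "((\<lambda>t. (y + t *\<^sub>R b) \<bullet> (y + t *\<^sub>R b)) \<longlongrightarrow> y \<bullet> y) (at 0)"
    using DERIV_isCont[OF DERIV_sx[of y b]] by (simp add: isCont_def)
  have "0 < y \<bullet> y" using assms by (simp add: RV_def RU_def)
  from order_tendstoD(1)[OF c this] have "eventually (\<lambda>t. 0 < (y + t *\<^sub>R b) \<bullet> (y + t *\<^sub>R b)) (at 0)" .
  then show ?thesis using assms unfolding eventually_nhds_conv_at
    by (auto simp: RV_def RU_def elim: eventually_mono)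
qed

lemma pdx_ev:
  assumes "eventually (\<lambda>t. f (x + t *\<^sub>R axis k 1) y = g t) (nhds 0)" "(g has_real_derivative D) (at 0)"
  shows "pdx k f x y = D"
  unfolding pdx_def
  by (rule DERIV_imp_deriv, subst DERIV_cong_ev[OF refl assms(1) refl]) (rule assms(2))

lemma pdy_ev:
  assumes "eventually (\<lambda>t. f x (y + t *\<^sub>R axis k 1) = g t) (nhds 0)" "(g has_real_derivative D) (at 0)"
  shows "pdy k f x y = D"
  unfolding pdy_def
  by (rule DERIV_imp_deriv, subst DERIV_cong_ev[OF refl assms(1) refl]) (rule assms(2))



abbreviation "F2 \<equiv> (\<lambda>x y. (FunkF x y)^2)"

lemma F2_pt: "(FunkF x y)^2 = eE (x\<bullet>x) (x\<bullet>y) (y\<bullet>y)"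
  by (simp add: FunkF_eq eE_def power2_eq_square)

lemma pdyF2: assumes "RV x y"
  shows "pdy j F2 x y = eEu (x\<bullet>x) (x\<bullet>y) (y\<bullet>y) * x$j + 2 * eEq (x\<bullet>x) (x\<bullet>y) (y\<bullet>y) * y$j"
  apply (rule pdy_ev[where g="\<lambda>t. eE (x\<bullet>x) (x\<bullet>(y + t *\<^sub>R axis j 1)) ((y + t *\<^sub>R axis j 1)\<bullet>(y + t *\<^sub>R axis j 1))"])
   apply (simp add: F2_pt)
  by (rule line_y[OF CH_eE assms]) (simp add: inner_axis)

lemma pdxF2: assumes "RV x y"
  shows "pdx j F2 x y = 2 * eEs (x\<bullet>x) (x\<bullet>y) (y\<bullet>y) * x$j + eEu (x\<bullet>x) (x\<bullet>y) (y\<bullet>y) * y$j"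
  apply (rule pdx_ev[where g="\<lambda>t. eE ((x + t *\<^sub>R axis j 1)\<bullet>(x + t *\<^sub>R axis j 1)) ((x + t *\<^sub>R axis j 1)\<bullet>y) (y\<bullet>y)"])
   apply (simp add: F2_pt)
  by (rule line_x[OF CH_eE assms]) (simp add: inner_axis inner_axis')

lemma pdyy: assumes "RV x y"
  shows "pdy i (pdy j F2) x y = eEuu (x\<bullet>x) (x\<bullet>y) (y\<bullet>y) * x$i * x$j + 2 * eEuq (x\<bullet>x) (x\<bullet>y) (y\<bullet>y) * y$i * x$j
     + 2 * eEuq (x\<bullet>x) (x\<bullet>y) (y\<bullet>y) * x$i * y$j + 4 * eEqq (x\<bullet>x) (x\<bullet>y) (y\<bullet>y) * y$i * y$j
     + 2 * eEq (x\<bullet>x) (x\<bullet>y) (y\<bullet>y) * (axis i 1 :: real^2) $ j"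
proof -
  let ?y = "\<lambda>t. y + t *\<^sub>R axis i 1"
  have d1: "((\<lambda>t. eEu (x\<bullet>x) (x\<bullet>?y t) (?y t\<bullet>?y t)) has_real_derivative
     eEuu (x\<bullet>x) (x\<bullet>y) (y\<bullet>y) * x$i + 2 * eEuq (x\<bullet>x) (x\<bullet>y) (y\<bullet>y) * y$i) (at 0)"
    by (rule line_y[OF CH_eEu assms]) (simp add: inner_axis)
  have d2: "((\<lambda>t. eEq (x\<bullet>x) (x\<bullet>?y t) (?y t\<bullet>?y t)) has_real_derivative
     eEuq (x\<bullet>x) (x\<bullet>y) (y\<bullet>y) * x$i + 2 * eEqq (x\<bullet>x) (x\<bullet>y) (y\<bullet>y) * y$i) (at 0)"
    by (rule line_y[OF CH_eEq assms]) (simp add: inner_axis)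
  have d3: "((\<lambda>t. (?y t) $ j) has_real_derivative (axis i 1 :: real^2) $ j) (at 0)" by (rule DERIV_comp)
  show ?thesis
    apply (rule pdy_ev[where g="\<lambda>t. eEu (x\<bullet>x) (x\<bullet>?y t) (?y t\<bullet>?y t) * x$j + 2 * eEq (x\<bullet>x) (x\<bullet>?y t) (?y t\<bullet>?y t) * (?y t)$j"])
     apply (rule eventually_mono[OF ev_y[OF assms, of "axis i 1"]])
     apply (erule pdyF2)
    apply (rule DERIV_cong)
     apply (rule derivative_eq_intros d1 d2 d3 refl)+
    by (simp add: algebra_simps)
qed

lemma pdxy: assumes "RV x y"
  shows "pdx k (pdy l F2) x y = 2 * eEus (x\<bullet>x) (x\<bullet>y) (y\<bullet>y) * x$k * x$l + eEuu (x\<bullet>x) (x\<bullet>y) (y\<bullet>y) * y$k * x$l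
     + eEu (x\<bullet>x) (x\<bullet>y) (y\<bullet>y) * (axis k 1 :: real^2) $ l
     + 4 * eEqs (x\<bullet>x) (x\<bullet>y) (y\<bullet>y) * x$k * y$l + 2 * eEuq (x\<bullet>x) (x\<bullet>y) (y\<bullet>y) * y$k * y$l"
proof -
  let ?x = "\<lambda>t. x + t *\<^sub>R axis k 1"
  have d1: "((\<lambda>t. eEu (?x t\<bullet>?x t) (?x t\<bullet>y) (y\<bullet>y)) has_real_derivative
     2 * eEus (x\<bullet>x) (x\<bullet>y) (y\<bullet>y) * x$k + eEuu (x\<bullet>x) (x\<bullet>y) (y\<bullet>y) * y$k) (at 0)"
    by (rule line_x[OF CH_eEu assms]) (simp add: inner_axis inner_axis')
  have d2: "((\<lambda>t. eEq (?x t\<bullet>?x t) (?x t\<bullet>y) (y\<bullet>y)) has_real_derivative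
     2 * eEqs (x\<bullet>x) (x\<bullet>y) (y\<bullet>y) * x$k + eEuq (x\<bullet>x) (x\<bullet>y) (y\<bullet>y) * y$k) (at 0)"
    by (rule line_x[OF CH_eEq assms]) (simp add: inner_axis inner_axis')
  have d3: "((\<lambda>t. (?x t) $ l) has_real_derivative (axis k 1 :: real^2) $ l) (at 0)" by (rule DERIV_comp)
  show ?thesis
    apply (rule pdx_ev[where g="\<lambda>t. eEu (?x t\<bullet>?x t) (?x t\<bullet>y) (y\<bullet>y) * (?x t)$l + 2 * eEq (?x t\<bullet>?x t) (?x t\<bullet>y) (y\<bullet>y) * y$l"])
     apply (rule eventually_mono[OF ev_x[OF assms, of "axis k 1"]])
     apply (erule pdyF2)
    apply (rule DERIV_cong)
     apply (rule derivative_eq_intros d1 d2 d3 refl)+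
    by (simp add: algebra_simps)
qed



lemma minv: fixes E :: "real^2^2" assumes "invertible E" "E *v v = b" shows "matrix_inv E *v b = v"
proof -
  have "matrix_inv E ** E = mat 1" using someI_ex[OF assms(1)[unfolded invertible_def]] unfolding matrix_inv_def by blast
  then show ?thesis using assms(2) by (metis matrix_vector_mul_assoc matrix_vector_mul_lid)
qed

lemma inner2: "(x::real^2) \<bullet> y = x$1 * y$1 + x$2 * y$2" by (simp add: inner_vec_def sum_2)

lemma axis_vals: "(axis (1::2) (1::real)) $ 1 = 1" "(axis (1::2) (1::real)) $ 2 = 0"
  "(axis (2::2) (1::real)) $ 1 = 0" "(axis (2::2) (1::real)) $ 2 = 1"
  by (simp_all add: axis_def)

lemma det_fund: assumes "RV x y"
  shows "det (fund_tensor FunkF x y) \<noteq> 0"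
proof -
  define s where "s = x\<bullet>x"
  define u where "u = x\<bullet>y"
  define q where "q = y\<bullet>y"
  have R: "RU s u q" using assms by (simp add: RV_def s_def u_def q_def)
  have e: "det (fund_tensor FunkF x y) = (1/4) * (4 * (eEq s u q)^2 + 2 * eEq s u q * (eEuu s u q * s + 4 * eEuq s u q * u + 4 * eEqq s u q * q)
   + 4 * (eEuu s u q * eEqq s u q - (eEuq s u q)^2) * (s * q - u^2))"
    unfolding det_2 fund_tensor_def
    apply (simp add: pdyy[OF assms] axis_vals)
    unfolding s_def u_def q_def inner2
    by (simp add: algebra_simps power2_eq_square)
  have "0 < 4 * (fF s u q)^3 * rK^2 / (WW s u q)^3"
    using fF_pos[OF R] RU_facts(3)[OF R] rK_pos by simp
  then show ?thesis unfolding e DetS[OF R] using fF_nz[OF R] RU_facts(9)[OF R] rK_pos by simp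
qed


lemma spray_eq: assumes "RV x y"
  shows "spray FunkF i x y = pP (x\<bullet>x) (x\<bullet>y) (y\<bullet>y) * y$i"
proof -
  define s where "s = x\<bullet>x"
  define u where "u = x\<bullet>y"
  define q where "q = y\<bullet>y"
  have R: "RU s u q" using assms by (simp add: RV_def s_def u_def q_def)
  define E where "E = fund_tensor FunkF x y"
  define b where "b = (\<chi> l. (\<Sum>k\<in>UNIV. pdx k (pdy l F2) x y * y $ k) - pdx l F2 x y)"
  define v where "v = (4 * pP s u q) *\<^sub>R y"
  have comb: "(E *v v)$l - b$l = x$l * (2 * pP s u q * (u * eEuu s u q + 2 * q * eEuq s u q) - (2 * u * eEus s u q + q * eEuu s u q - 2 * eEs s u q))
     + y$l * (2 * pP s u q * (2 * u * eEuq s u q + 4 * q * eEqq s u q + 2 * eEq s u q) - (4 * u * eEqs s u q + 2 * q * eEuq s u q))" for l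
    using exhaust_2[of l]
    apply (elim disjE)
    unfolding E_def b_def v_def fund_tensor_def matrix_vector_mult_def
     apply (simp_all add: sum_2 pdyy[OF assms] pdxy[OF assms] pdxF2[OF assms] axis_vals)
     unfolding s_def u_def q_def inner2
     by (simp_all add: algebra_simps)
  have "(E *v v)$l = b$l" for l using comb[of l] unfolding I1[OF R] I2[OF R] by simp
  then have "E *v v = b" unfolding vec_eq_iff by simp
  then have "matrix_inv E *v b = v" using det_fund[OF assms] by (intro minv) (simp_all add: E_def invertible_det_nz)
  then have "(matrix_inv E *v b) $ i = 4 * pP s u q * y$i" by (simp add: v_def)
  then show ?thesis unfolding spray_def fund_tensor_inv_def E_def[symmetric]
    by (simp add: b_def matrix_vector_mult_def s_def u_def q_def mult_ac)
qed



abbreviation "SP i \<equiv> spray FunkF i"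

lemma R2: assumes "RV x y"
  shows "pdx k (SP i) x y = (2 * pPs (x\<bullet>x) (x\<bullet>y) (y\<bullet>y) * x$k + pPu (x\<bullet>x) (x\<bullet>y) (y\<bullet>y) * y$k) * y$i"
proof -
  let ?x = "\<lambda>t. x + t *\<^sub>R axis k 1"
  have d1: "((\<lambda>t. pP (?x t\<bullet>?x t) (?x t\<bullet>y) (y\<bullet>y)) has_real_derivative
     2 * pPs (x\<bullet>x) (x\<bullet>y) (y\<bullet>y) * x$k + pPu (x\<bullet>x) (x\<bullet>y) (y\<bullet>y) * y$k) (at 0)"
    by (rule line_x[OF CH_pP assms]) (simp add: inner_axis inner_axis')
  show ?thesis
    apply (rule pdx_ev[where g="\<lambda>t. pP (?x t\<bullet>?x t) (?x t\<bullet>y) (y\<bullet>y) * y$i"])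
     apply (rule eventually_mono[OF ev_x[OF assms, of "axis k 1"]])
     apply (erule spray_eq)
    apply (rule DERIV_cong)
     apply (rule derivative_eq_intros d1 refl)+
    by (simp add: algebra_simps)
qed

lemma R3: assumes "RV x y"
  shows "pdy k (SP i) x y = (pPu (x\<bullet>x) (x\<bullet>y) (y\<bullet>y) * x$k + 2 * pPq (x\<bullet>x) (x\<bullet>y) (y\<bullet>y) * y$k) * y$i
     + pP (x\<bullet>x) (x\<bullet>y) (y\<bullet>y) * (axis k 1 :: real^2) $ i"
proof -
  let ?y = "\<lambda>t. y + t *\<^sub>R axis k 1"
  have d1: "((\<lambda>t. pP (x\<bullet>x) (x\<bullet>?y t) (?y t\<bullet>?y t)) has_real_derivative
     pPu (x\<bullet>x) (x\<bullet>y) (y\<bullet>y) * x$k + 2 * pPq (x\<bullet>x) (x\<bullet>y) (y\<bullet>y) * y$k) (at 0)"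
    by (rule line_y[OF CH_pP assms]) (simp add: inner_axis)
  have d3: "((\<lambda>t. (?y t) $ i) has_real_derivative (axis k 1 :: real^2) $ i) (at 0)" by (rule DERIV_comp)
  show ?thesis
    apply (rule pdy_ev[where g="\<lambda>t. pP (x\<bullet>x) (x\<bullet>?y t) (?y t\<bullet>?y t) * (?y t)$i"])
     apply (rule eventually_mono[OF ev_y[OF assms, of "axis k 1"]])
     apply (erule spray_eq)
    apply (rule DERIV_cong)
     apply (rule derivative_eq_intros d1 d3 refl)+
    by (simp add: algebra_simps)
qed

context
  fixes x y :: "real^2" and a1 a2 a3 b1 b2 b3 :: "real \<Rightarrow> real \<Rightarrow> real \<Rightarrow> real"
  assumes RVa: "RV x y" and u0: "x \<bullet> y = 0" and Ca: "CH RU0 pPu a1 a2 a3" and Cb: "CH RU0 pPq b1 b2 b3"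
begin

lemma R4:
  "pdx j (pdy k (SP i)) x y =
    (2 * a1 (x\<bullet>x) (x\<bullet>y) (y\<bullet>y) * x$j + a2 (x\<bullet>x) (x\<bullet>y) (y\<bullet>y) * y$j) * x$k * y$i
    + pPu (x\<bullet>x) (x\<bullet>y) (y\<bullet>y) * (axis j 1 :: real^2) $ k * y$i
    + 2 * (2 * b1 (x\<bullet>x) (x\<bullet>y) (y\<bullet>y) * x$j + b2 (x\<bullet>x) (x\<bullet>y) (y\<bullet>y) * y$j) * y$k * y$i
    + (2 * pPs (x\<bullet>x) (x\<bullet>y) (y\<bullet>y) * x$j + pPu (x\<bullet>x) (x\<bullet>y) (y\<bullet>y) * y$j) * (axis k 1 :: real^2) $ i"
proof -
  let ?x = "\<lambda>t. x + t *\<^sub>R axis j 1"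
  have d1: "((\<lambda>t. pPu (?x t\<bullet>?x t) (?x t\<bullet>y) (y\<bullet>y)) has_real_derivative
     2 * a1 (x\<bullet>x) (x\<bullet>y) (y\<bullet>y) * x$j + a2 (x\<bullet>x) (x\<bullet>y) (y\<bullet>y) * y$j) (at 0)"
    by (rule line_x0[OF Ca RVa u0]) (simp add: inner_axis inner_axis')
  have d2: "((\<lambda>t. pPq (?x t\<bullet>?x t) (?x t\<bullet>y) (y\<bullet>y)) has_real_derivative
     2 * b1 (x\<bullet>x) (x\<bullet>y) (y\<bullet>y) * x$j + b2 (x\<bullet>x) (x\<bullet>y) (y\<bullet>y) * y$j) (at 0)"
    by (rule line_x0[OF Cb RVa u0]) (simp add: inner_axis inner_axis')
  have d0: "((\<lambda>t. pP (?x t\<bullet>?x t) (?x t\<bullet>y) (y\<bullet>y)) has_real_derivative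
     2 * pPs (x\<bullet>x) (x\<bullet>y) (y\<bullet>y) * x$j + pPu (x\<bullet>x) (x\<bullet>y) (y\<bullet>y) * y$j) (at 0)"
    by (rule line_x[OF CH_pP RVa]) (simp add: inner_axis inner_axis')
  have d3: "((\<lambda>t. (?x t) $ k) has_real_derivative (axis j 1 :: real^2) $ k) (at 0)" by (rule DERIV_comp)
  show ?thesis
    apply (rule pdx_ev[where g="\<lambda>t. (pPu (?x t\<bullet>?x t) (?x t\<bullet>y) (y\<bullet>y) * (?x t)$k + 2 * pPq (?x t\<bullet>?x t) (?x t\<bullet>y) (y\<bullet>y) * y$k) * y$i
     + pP (?x t\<bullet>?x t) (?x t\<bullet>y) (y\<bullet>y) * (axis k 1 :: real^2) $ i"])
     apply (rule eventually_mono[OF ev_x[OF RVa, of "axis j 1"]])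
     apply (erule R3)
    apply (rule DERIV_cong)
     apply (rule derivative_eq_intros d0 d1 d2 d3 refl)+
    by (simp add: algebra_simps)
qed

lemma R5:
  "pdy j (pdy k (SP i)) x y =
    (a2 (x\<bullet>x) (x\<bullet>y) (y\<bullet>y) * x$j + 2 * a3 (x\<bullet>x) (x\<bullet>y) (y\<bullet>y) * y$j) * x$k * y$i
    + 2 * (b2 (x\<bullet>x) (x\<bullet>y) (y\<bullet>y) * x$j + 2 * b3 (x\<bullet>x) (x\<bullet>y) (y\<bullet>y) * y$j) * y$k * y$i
    + 2 * pPq (x\<bullet>x) (x\<bullet>y) (y\<bullet>y) * (axis j 1 :: real^2) $ k * y$i
    + (pPu (x\<bullet>x) (x\<bullet>y) (y\<bullet>y) * x$k + 2 * pPq (x\<bullet>x) (x\<bullet>y) (y\<bullet>y) * y$k) * (axis j 1 :: real^2) $ i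
    + (pPu (x\<bullet>x) (x\<bullet>y) (y\<bullet>y) * x$j + 2 * pPq (x\<bullet>x) (x\<bullet>y) (y\<bullet>y) * y$j) * (axis k 1 :: real^2) $ i"
proof -
  let ?y = "\<lambda>t. y + t *\<^sub>R axis j 1"
  have d1: "((\<lambda>t. pPu (x\<bullet>x) (x\<bullet>?y t) (?y t\<bullet>?y t)) has_real_derivative
     a2 (x\<bullet>x) (x\<bullet>y) (y\<bullet>y) * x$j + 2 * a3 (x\<bullet>x) (x\<bullet>y) (y\<bullet>y) * y$j) (at 0)"
    by (rule line_y0[OF Ca RVa u0]) (simp add: inner_axis)
  have d2: "((\<lambda>t. pPq (x\<bullet>x) (x\<bullet>?y t) (?y t\<bullet>?y t)) has_real_derivative
     b2 (x\<bullet>x) (x\<bullet>y) (y\<bullet>y) * x$j + 2 * b3 (x\<bullet>x) (x\<bullet>y) (y\<bullet>y) * y$j) (at 0)"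
    by (rule line_y0[OF Cb RVa u0]) (simp add: inner_axis)
  have d0: "((\<lambda>t. pP (x\<bullet>x) (x\<bullet>?y t) (?y t\<bullet>?y t)) has_real_derivative
     pPu (x\<bullet>x) (x\<bullet>y) (y\<bullet>y) * x$j + 2 * pPq (x\<bullet>x) (x\<bullet>y) (y\<bullet>y) * y$j) (at 0)"
    by (rule line_y[OF CH_pP RVa]) (simp add: inner_axis)
  have d3: "((\<lambda>t. (?y t) $ k) has_real_derivative (axis j 1 :: real^2) $ k) (at 0)" by (rule DERIV_comp)
  have d4: "((\<lambda>t. (?y t) $ i) has_real_derivative (axis j 1 :: real^2) $ i) (at 0)" by (rule DERIV_comp)
  show ?thesis
    apply (rule pdy_ev[where g="\<lambda>t. (pPu (x\<bullet>x) (x\<bullet>?y t) (?y t\<bullet>?y t) * x$k + 2 * pPq (x\<bullet>x) (x\<bullet>?y t) (?y t\<bullet>?y t) * (?y t)$k) * (?y t)$i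
     + pP (x\<bullet>x) (x\<bullet>?y t) (?y t\<bullet>?y t) * (axis k 1 :: real^2) $ i"])
     apply (rule eventually_mono[OF ev_y[OF RVa, of "axis j 1"]])
     apply (erule R3)
    apply (rule DERIV_cong)
     apply (rule derivative_eq_intros d0 d1 d2 d3 d4 refl)+
    by (simp add: algebra_simps)
qed

lemma ric_point:
  assumes hb: "b2 (x\<bullet>x) 0 (y\<bullet>y) = 0" "b3 (x\<bullet>x) 0 (y\<bullet>y) = - pP (x\<bullet>x) 0 (y\<bullet>y) / (4 * (y\<bullet>y)^2)"
    and xpos: "0 < x\<bullet>x"
  shows "ricci FunkF x y = (pP (x\<bullet>x) 0 (y\<bullet>y))^2 - (y\<bullet>y) * pPu (x\<bullet>x) 0 (y\<bullet>y)"
proof -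
  have R0: "RU (x\<bullet>x) 0 (y\<bullet>y)" using RVa u0 by (simp add: RV_def)
  have qpos: "0 < y\<bullet>y" using R0 by (simp add: RU_def)
  note Zq = Z1[OF R0]
  define lam where "lam = (x$1 * y$2 - x$2 * y$1) / (x\<bullet>x)"
  have xx: "x\<bullet>x = x$1 * x$1 + x$2 * x$2" by (rule inner2)
  have xy: "x$1 * y$1 + x$2 * y$2 = 0" using u0 inner2[of x y] by simp
  have "0 < x$1 * x$1 + x$2 * x$2" using xpos xx by simp
  then have Snz: "x$1 * x$1 + x$2 * x$2 \<noteq> 0" by linarith
  have e1: "y$1 * (x$1 * x$1 + x$2 * x$2) = x$1 * (x$1 * y$1 + x$2 * y$2) - x$2 * (x$1 * y$2 - x$2 * y$1)"
    by (simp add: algebra_simps)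
  have e2: "y$2 * (x$1 * x$1 + x$2 * x$2) = x$2 * (x$1 * y$1 + x$2 * y$2) + x$1 * (x$1 * y$2 - x$2 * y$1)"
    by (simp add: algebra_simps)
  have y1: "y$1 = - lam * x$2" unfolding lam_def xx using e1 Snz unfolding xy
    by (simp add: field_simps)
  have y2: "y$2 = lam * x$1" unfolding lam_def xx using e2 Snz unfolding xy
    by (simp add: field_simps)
  have yy: "y\<bullet>y = lam^2 * (x\<bullet>x)" unfolding inner2[of y y] y1 y2 xx by (simp add: algebra_simps power2_eq_square)
  obtain P Ps Pu Pq A1 A2 A3 B1 B2 B3 where at: "pP (x\<bullet>x) 0 (y\<bullet>y) = P" "pPs (x\<bullet>x) 0 (y\<bullet>y) = Ps" "pPu (x\<bullet>x) 0 (y\<bullet>y) = Pu"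
      "pPq (x\<bullet>x) 0 (y\<bullet>y) = Pq"
      "a1 (x\<bullet>x) 0 (y\<bullet>y) = A1" "a2 (x\<bullet>x) 0 (y\<bullet>y) = A2" "a3 (x\<bullet>x) 0 (y\<bullet>y) = A3" "b1 (x\<bullet>x) 0 (y\<bullet>y) = B1"
      "b2 (x\<bullet>x) 0 (y\<bullet>y) = B2" "b3 (x\<bullet>x) 0 (y\<bullet>y) = B3" by blast
  obtain Q where Q: "y\<bullet>y = Q" by blast
  have Qnz: "Q \<noteq> 0" using qpos Q by auto
  have QQ: "Q = lam * lam * (x$1 * x$1 + x$2 * x$2)" using yy xx Q by (simp add: power2_eq_square)
  note simps = R2[OF RVa] R3[OF RVa] R4 R5 spray_eq[OF RVa] axis_vals u0
  have T1: "(\<Sum>i\<in>UNIV. pdx i (SP i) x y) = Pu * Q"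
    unfolding sum_2 apply (simp only: simps) apply (simp only: at) apply (simp only: Q y1 y2) unfolding QQ by (simp add: algebra_simps)
  have T2: "(\<Sum>i\<in>UNIV. \<Sum>j\<in>UNIV. y$j * pdx j (pdy i (SP i)) x y) = 3 * Pu * Q + 2 * B2 * Q^2"
    unfolding sum_2 apply (simp only: simps) apply (simp only: at) apply (simp only: Q y1 y2) unfolding QQ by (simp add: algebra_simps power2_eq_square)
  have T3: "(\<Sum>i\<in>UNIV. \<Sum>j\<in>UNIV. SP j x y * pdy j (pdy i (SP i)) x y) = P * (4 * B3 * Q^2 + 8 * Pq * Q)"
    unfolding sum_2 apply (simp only: simps) apply (simp only: at) apply (simp only: Q y1 y2) unfolding QQ by (simp add: algebra_simps power2_eq_square)
  have T4: "(\<Sum>i\<in>UNIV. \<Sum>j\<in>UNIV. pdy j (SP i) x y * pdy i (SP j) x y) = 4 * Pq^2 * Q^2 + 4 * P * Pq * Q + 2 * P^2"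
    unfolding sum_2 apply (simp only: simps) apply (simp only: at) apply (simp only: Q y1 y2) unfolding QQ by (simp add: algebra_simps power2_eq_square)
  have split: "ricci FunkF x y = 2 * (\<Sum>i\<in>UNIV. pdx i (SP i) x y) - (\<Sum>i\<in>UNIV. \<Sum>j\<in>UNIV. y$j * pdx j (pdy i (SP i)) x y)
     + 2 * (\<Sum>i\<in>UNIV. \<Sum>j\<in>UNIV. SP j x y * pdy j (pdy i (SP i)) x y) - (\<Sum>i\<in>UNIV. \<Sum>j\<in>UNIV. pdy j (SP i) x y * pdy i (SP j) x y)"
    unfolding ricci_def riemann_def sum_2 by (simp add: algebra_simps)
  have v: "Pq = P / (2 * Q)" "B2 = 0" "B3 = - P / (4 * Q^2)" using Zq hb at Q by auto
  show ?thesis unfolding split T1 T2 T3 T4 unfolding at unfolding Q v using Qnz by (simp add: field_simps power2_eq_square)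
qed

end



theorem corollary4p3:
  fixes a :: real and x \<xi> :: "real^2"
  assumes "0 < a" and "a < rK"
    and "norm x = a"
    and "\<xi> \<noteq> 0" and "x \<bullet> \<xi> = 0"
  shows "flag_curvature FunkF x \<xi> = - (1 - (3/4) * ((1 - rK^2) / (1 - a^2))^2)
         \<and> flag_curvature FunkF x \<xi> < 0"
proof -
  have xx: "x \<bullet> x = a^2" using assms(3) by (simp add: power2_norm_eq_inner[symmetric])
  have a2: "a^2 < rK^2" using assms(1,2) by (simp add: power_strict_mono)
  have qpos: "0 < \<xi> \<bullet> \<xi>" using assms(4) by simp
  have RVa: "RV x \<xi>" unfolding RV_def RU_def using xx a2 qpos by simp
  have R0: "RU (x\<bullet>x) 0 (\<xi>\<bullet>\<xi>)" using RVa assms(5) by (simp add: RV_def)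
  obtain a1 a2 a3 where Ca: "CH RU0 pPu a1 a2 a3" using CH_pPu by blast
  obtain b1 b2 b3 where Cb: "CH RU0 pPq b1 b2 b3"
    and hb: "\<forall>s q. RU s 0 q \<longrightarrow> b2 s 0 q = 0 \<and> b3 s 0 q = - pP s 0 q / (4 * q^2)" using CH_pPq by blast
  have xpos: "0 < x \<bullet> x" using xx assms(1) by simp
  have ric: "ricci FunkF x \<xi> = (pP (x\<bullet>x) 0 (\<xi>\<bullet>\<xi>))^2 - (\<xi>\<bullet>\<xi>) * pPu (x\<bullet>x) 0 (\<xi>\<bullet>\<xi>)"
    using ric_point[OF RVa assms(5) Ca Cb] hb R0 xpos by blast
  have F: "FunkF x \<xi> = fF (x\<bullet>x) 0 (\<xi>\<bullet>\<xi>)" using FunkF_eq assms(5) by simp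
  have fnz: "fF (x\<bullet>x) 0 (\<xi>\<bullet>\<xi>) \<noteq> 0" using fF_nz[OF R0] .
  have K: "flag_curvature FunkF x \<xi> = - (1 - (3/4) * (cc / BB (x\<bullet>x))^2)"
    unfolding flag_curvature_def ric Z3[OF R0] F using fnz by simp
  have ccB: "cc / BB (x\<bullet>x) = (1 - rK^2) / (1 - a^2)" by (simp add: cc_def BB_def xx)
  have r1: "0 < cc / BB (x\<bullet>x)" "cc / BB (x\<bullet>x) < 1"
    using RU_facts(2,5)[OF R0] cc_pos by simp_all
  have "(cc / BB (x\<bullet>x))^2 < 1" using r1 by (simp add: power_less_one_iff)
  then have "flag_curvature FunkF x \<xi> < 0" unfolding K by simp
  then show ?thesis using K ccB by simp
qed



end
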